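(* Let $X$ be a spectral space. Then $\mathcal X'(X)$ with the Zariski topology is a spectral space, and its inverse topology coincides with the lower Vietoris topology on $\mathcal X'(X)$.
   Context: $\mathcal X'(X)$ is the set of nonempty closed subsets of $X$. Its Zariski topology has as basis of open sets $\mathcal U'(\Omega):=\{Y\in\mathcal X'(X)\mid Y\cap\Omega=\emptyset\}$, $\Omega$ ranging over quasi-compact open subsets of $X$. For a spectral space $Y$, the inverse topology on $Y$ is the topology having the quasi-compact open subsets of $Y$ as a basis of closed sets. The lower Vietoris topology on $\mathcal X'(X)$ is the topology with subbasis of open sets $U^-:=\{C\in\mathcal X'(X)\mid C\cap U\neq\emptyset\}$, $U$ ranging over open subsets of $X$. *)

theory Defs
  imports "HOL-Analysis.Analysis"
begin

definition qc_open :: "'a topology \<Rightarrow> 'a set \<Rightarrow> bool" where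
  "qc_open X U \<longleftrightarrow> openin X U \<and> compactin X U"

definition irreducible_in :: "'a topology \<Rightarrow> 'a set \<Rightarrow> bool" where
  "irreducible_in X C \<longleftrightarrow> C \<subseteq> topspace X \<and> C \<noteq> {} \<and>
     (\<forall>A B. closedin X A \<and> closedin X B \<and> C \<subseteq> A \<union> B \<longrightarrow> C \<subseteq> A \<or> C \<subseteq> B)"

definition spectral_space :: "'a topology \<Rightarrow> bool" where
  "spectral_space X \<longleftrightarrow>
     compact_space X \<and> t0_space X \<and>
     (\<forall>U V. qc_open X U \<and> qc_open X V \<longrightarrow> qc_open X (U \<inter> V)) \<and>
     openin X = arbitrary union_of (qc_open X) \<and>
     (\<forall>C. closedin X C \<and> irreducible_in X C \<longrightarrow> (\<exists>x\<in>topspace X. X closure_of {x} = C))"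

definition inverse_topology :: "'a topology \<Rightarrow> 'a topology" where
  "inverse_topology Y = topology_generated_by {topspace Y - U | U. qc_open Y U}"

definition Xprime :: "'a topology \<Rightarrow> 'a set set" where
  "Xprime X = {Y. closedin X Y \<and> Y \<noteq> {}}"

definition Uprime :: "'a topology \<Rightarrow> 'a set \<Rightarrow> 'a set set" where
  "Uprime X \<Omega> = {Y \<in> Xprime X. Y \<inter> \<Omega> = {}}"

definition zariski_Xprime :: "'a topology \<Rightarrow> 'a set topology" where
  "zariski_Xprime X = topology_generated_by {Uprime X \<Omega> | \<Omega>. qc_open X \<Omega>}"

definition lower_vietoris :: "'a topology \<Rightarrow> 'a set topology" where
  "lower_vietoris X = topology_generated_by {{C \<in> Xprime X. C \<inter> U \<noteq> {}} | U. openin X U}"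

end

theory Submission
  imports Defs
begin

lemma qc_open_Un: "qc_open X A \<Longrightarrow> qc_open X B \<Longrightarrow> qc_open X (A \<union> B)"
  by (auto simp: qc_open_def compactin_Un)

lemma qc_open_empty: "qc_open X {}"
  by (simp add: qc_open_def)

lemma qc_open_Union: "finite G \<Longrightarrow> (\<And>g. g \<in> G \<Longrightarrow> qc_open X g) \<Longrightarrow> qc_open X (\<Union>G)"
  by (induction G rule: finite_induct) (auto intro: qc_open_Un qc_open_empty)

lemma spectral_basis:
  assumes "spectral_space X" "openin X U" "x \<in> U"
  shows "\<exists>\<Omega>. qc_open X \<Omega> \<and> x \<in> \<Omega> \<and> \<Omega> \<subseteq> U"
proof -
  have "(arbitrary union_of (qc_open X)) U"
    using assms by (simp add: spectral_space_def)
  then show ?thesis using assms(3) by (auto simp: union_of_def)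
qed

lemma Uprime_Un: "Uprime X (A \<union> B) = Uprime X A \<inter> Uprime X B"
  by (auto simp: Uprime_def)

lemma Uprime_sub: "Uprime X A \<subseteq> Xprime X"
  by (auto simp: Uprime_def)

lemma Uprime_empty: "Uprime X {} = Xprime X"
  by (auto simp: Uprime_def)

lemma topspace_Z: "topspace (zariski_Xprime X) = Xprime X"
  unfolding zariski_Xprime_def topology_generated_by_topspace
proof (rule equalityI)
  show "\<Union>{Uprime X \<Omega> |\<Omega>. qc_open X \<Omega>} \<subseteq> Xprime X" by (auto simp: Uprime_def)
  have "Uprime X {} \<in> {Uprime X \<Omega> |\<Omega>. qc_open X \<Omega>}"
    by (rule CollectI, rule exI[of _ "{}"], rule conjI, rule refl, rule qc_open_empty)
  then have "Uprime X {} \<subseteq> \<Union>{Uprime X \<Omega> |\<Omega>. qc_open X \<Omega>}" by (rule Union_upper)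
  then show "Xprime X \<subseteq> \<Union>{Uprime X \<Omega> |\<Omega>. qc_open X \<Omega>}" by (simp only: Uprime_empty)
qed

lemma open_Z_Uprime: "qc_open X \<Omega> \<Longrightarrow> openin (zariski_Xprime X) (Uprime X \<Omega>)"
  unfolding zariski_Xprime_def
  by (rule topology_generated_by_Basis, rule CollectI, rule exI[of _ \<Omega>], rule conjI, rule refl)

lemma open_Z_char:
  assumes "openin (zariski_Xprime X) V"
  shows "V \<subseteq> Xprime X \<and> (\<forall>Y\<in>V. \<exists>\<Omega>. qc_open X \<Omega> \<and> Y \<in> Uprime X \<Omega> \<and> Uprime X \<Omega> \<subseteq> V)"
proof -
  have "generate_topology_on {Uprime X \<Omega> | \<Omega>. qc_open X \<Omega>} V"
    using assms unfolding zariski_Xprime_def by (rule openin_topology_generated_by)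
  then show ?thesis
  proof (induction rule: generate_topology_on.induct)
    case Empty
    then show ?case by simp
  next
    case (Int a b)
    show ?case
    proof (intro conjI ballI)
      show "a \<inter> b \<subseteq> Xprime X" using Int.IH(1) by (simp add: le_infI1)
      fix Y assume Y: "Y \<in> a \<inter> b"
      then obtain A where A: "qc_open X A" "Y \<in> Uprime X A" "Uprime X A \<subseteq> a"
        using Int.IH(1) by (meson IntD1)
      obtain B where B: "qc_open X B" "Y \<in> Uprime X B" "Uprime X B \<subseteq> b"
        using Int.IH(2) Y by (meson IntD2)
      have "qc_open X (A \<union> B)" using A(1) B(1) by (rule qc_open_Un)
      moreover have "Y \<in> Uprime X (A \<union> B)" using A(2) B(2) by (simp add: Uprime_Un)
      moreover have "Uprime X (A \<union> B) \<subseteq> a \<inter> b" using A(3) B(3) by (auto simp: Uprime_Un)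
      ultimately show "\<exists>\<Omega>. qc_open X \<Omega> \<and> Y \<in> Uprime X \<Omega> \<and> Uprime X \<Omega> \<subseteq> a \<inter> b"
        by (intro exI[of _ "A \<union> B"] conjI)
    qed
  next
    case (UN K)
    show ?case
    proof (intro conjI ballI)
      show "\<Union>K \<subseteq> Xprime X" using UN.IH by (meson Union_least)
      fix Y assume "Y \<in> \<Union>K"
      then obtain k where k: "k \<in> K" "Y \<in> k" by (rule UnionE)
      then obtain \<Omega> where "qc_open X \<Omega>" "Y \<in> Uprime X \<Omega>" "Uprime X \<Omega> \<subseteq> k"
        using UN.IH by meson
      moreover have "k \<subseteq> \<Union>K" using k(1) by (rule Union_upper)
      ultimately show "\<exists>\<Omega>. qc_open X \<Omega> \<and> Y \<in> Uprime X \<Omega> \<and> Uprime X \<Omega> \<subseteq> \<Union>K"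
        by (meson order_trans)
    qed
  next
    case (Basis s)
    have "\<exists>\<Omega>. s = Uprime X \<Omega> \<and> qc_open X \<Omega>" using Basis by simp
    then obtain \<Omega> where \<Omega>: "s = Uprime X \<Omega>" "qc_open X \<Omega>" by (elim exE conjE)
    show ?case
    proof (intro conjI ballI)
      show "s \<subseteq> Xprime X" unfolding \<Omega>(1) by (rule Uprime_sub)
      fix Y assume "Y \<in> s"
      then show "\<exists>\<Omega>'. qc_open X \<Omega>' \<and> Y \<in> Uprime X \<Omega>' \<and> Uprime X \<Omega>' \<subseteq> s"
        using \<Omega> by (intro exI[of _ \<Omega>] conjI) simp_all
    qed
  qed
qed

lemma open_Z_down:
  assumes "openin (zariski_Xprime X) V" "Y \<in> V" "Y' \<in> Xprime X" "Y' \<subseteq> Y"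
  shows "Y' \<in> V"
proof -
  obtain \<Omega> where "Y \<in> Uprime X \<Omega>" "Uprime X \<Omega> \<subseteq> V"
    using open_Z_char[OF assms(1)] assms(2) by blast
  then show ?thesis using assms(3,4) by (auto simp: Uprime_def)
qed

lemma compact_Z_Uprime:
  assumes "qc_open X \<Omega>"
  shows "compactin (zariski_Xprime X) (Uprime X \<Omega>)"
  unfolding compactin_def
proof (intro conjI allI impI)
  show "Uprime X \<Omega> \<subseteq> topspace (zariski_Xprime X)" by (simp add: topspace_Z Uprime_sub)
  fix \<U> assume H: "(\<forall>U\<in>\<U>. openin (zariski_Xprime X) U) \<and> Uprime X \<Omega> \<subseteq> \<Union>\<U>"
  show "\<exists>\<F>. finite \<F> \<and> \<F> \<subseteq> \<U> \<and> Uprime X \<Omega> \<subseteq> \<Union>\<F>"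
  proof (cases "Uprime X \<Omega> = {}")
    case True then show ?thesis by blast
  next
    case False
    then obtain Y0 where Y0: "Y0 \<in> Uprime X \<Omega>" by blast
    define M where "M = topspace X - \<Omega>"
    have "closedin X M" using assms by (auto simp: M_def qc_open_def)
    moreover have "Y0 \<subseteq> M" using Y0 closedin_subset by (auto simp: M_def Uprime_def Xprime_def)
    ultimately have M: "M \<in> Uprime X \<Omega>" using Y0 by (auto simp: M_def Uprime_def Xprime_def)
    then obtain C where C: "C \<in> \<U>" "M \<in> C" using H by blast
    have "Uprime X \<Omega> \<subseteq> C"
    proof
      fix Y assume "Y \<in> Uprime X \<Omega>"
      then have "Y \<in> Xprime X" "Y \<subseteq> M" using closedin_subset
        by (auto simp: M_def Uprime_def Xprime_def)
      then show "Y \<in> C" using open_Z_down[of X C M Y] C H by blast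
    qed
    then show ?thesis using C by (intro exI[of _ "{C}"]) auto
  qed
qed


lemma qc_Z_Uprime: "qc_open X \<Omega> \<Longrightarrow> qc_open (zariski_Xprime X) (Uprime X \<Omega>)"
  by (simp add: qc_open_def open_Z_Uprime compact_Z_Uprime)

lemma qc_Z_char:
  assumes "qc_open (zariski_Xprime X) V"
  shows "\<exists>F. finite F \<and> (\<forall>\<Omega>\<in>F. qc_open X \<Omega>) \<and> V = \<Union>(Uprime X ` F)"
proof -
  define S where "S = {\<Omega>. qc_open X \<Omega> \<and> Uprime X \<Omega> \<subseteq> V}"
  have op: "openin (zariski_Xprime X) V" "compactin (zariski_Xprime X) V"
    using assms by (auto simp: qc_open_def)
  have cov: "V \<subseteq> \<Union>(Uprime X ` S)"
    using open_Z_char[OF op(1)] by (auto simp: S_def)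
  have "\<forall>U\<in>Uprime X ` S. openin (zariski_Xprime X) U"
    by (auto simp: S_def open_Z_Uprime)
  then obtain \<F> where F: "finite \<F>" "\<F> \<subseteq> Uprime X ` S" "V \<subseteq> \<Union>\<F>"
    using op(2) cov unfolding compactin_def by meson
  then obtain G where G: "G \<subseteq> S" "finite G" "\<F> = Uprime X ` G"
    using finite_subset_image[OF F(1) F(2)] by blast
  show ?thesis
    using G F(3) by (intro exI[of _ G]) (auto simp: S_def)
qed

lemma qc_Z_union:
  assumes "finite F" "\<forall>\<Omega>\<in>F. qc_open X \<Omega>"
  shows "qc_open (zariski_Xprime X) (\<Union>(Uprime X ` F))"
  unfolding qc_open_def
proof
  show "openin (zariski_Xprime X) (\<Union>(Uprime X ` F))"
    using assms by (intro openin_Union) (auto simp: open_Z_Uprime)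
  show "compactin (zariski_Xprime X) (\<Union>(Uprime X ` F))"
    using assms by (intro compactin_Union) (auto simp: compact_Z_Uprime)
qed

lemma qc_Z_Int:
  assumes "qc_open (zariski_Xprime X) U" "qc_open (zariski_Xprime X) V"
  shows "qc_open (zariski_Xprime X) (U \<inter> V)"
proof -
  obtain F where F: "finite F" "\<forall>\<Omega>\<in>F. qc_open X \<Omega>" "U = \<Union>(Uprime X ` F)"
    using qc_Z_char[OF assms(1)] by blast
  obtain G where G: "finite G" "\<forall>\<Omega>\<in>G. qc_open X \<Omega>" "V = \<Union>(Uprime X ` G)"
    using qc_Z_char[OF assms(2)] by blast
  define H where "H = (\<lambda>(a,b). a \<union> b) ` (F \<times> G)"
  have "U \<inter> V = \<Union>(Uprime X ` H)"
  proof
    show "U \<inter> V \<subseteq> \<Union>(Uprime X ` H)"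
    proof
      fix Y assume "Y \<in> U \<inter> V"
      then obtain a b where "a \<in> F" "b \<in> G" "Y \<in> Uprime X a" "Y \<in> Uprime X b"
        using F G by blast
      then have "a \<union> b \<in> H" "Y \<in> Uprime X (a \<union> b)" by (auto simp: H_def Uprime_Un)
      then show "Y \<in> \<Union>(Uprime X ` H)" by blast
    qed
    show "\<Union>(Uprime X ` H) \<subseteq> U \<inter> V"
      using F G by (auto simp: H_def Uprime_Un)
  qed
  moreover have "finite H" "\<forall>\<Omega>\<in>H. qc_open X \<Omega>"
    using F G by (auto simp: H_def intro: qc_open_Un)
  ultimately show ?thesis using qc_Z_union by metis
qed

lemma separate:
  assumes "spectral_space X" "Y1 \<in> Xprime X" "Y2 \<in> Xprime X" "x \<in> Y1" "x \<notin> Y2"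
  shows "\<exists>\<Omega>. qc_open X \<Omega> \<and> Y2 \<in> Uprime X \<Omega> \<and> Y1 \<notin> Uprime X \<Omega>"
proof -
  have "closedin X Y1" "closedin X Y2" using assms by (auto simp: Xprime_def)
  then have "openin X (topspace X - Y2)" "x \<in> topspace X - Y2"
    using assms closedin_subset by auto
  then obtain \<Omega> where "qc_open X \<Omega>" "x \<in> \<Omega>" "\<Omega> \<subseteq> topspace X - Y2"
    using spectral_basis[OF assms(1)] by blast
  then show ?thesis using assms by (intro exI[of _ \<Omega>]) (auto simp: Uprime_def)
qed

lemma t0_Z:
  assumes "spectral_space X"
  shows "t0_space (zariski_Xprime X)"
  unfolding t0_space_def topspace_Z
proof (intro ballI impI)
  fix Y1 Y2 assume Y: "Y1 \<in> Xprime X" "Y2 \<in> Xprime X" "Y1 \<noteq> Y2"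
  show "\<exists>U. openin (zariski_Xprime X) U \<and> (Y1 \<notin> U) = (Y2 \<in> U)"
  proof (cases "Y1 \<subseteq> Y2")
    case False
    then obtain x where "x \<in> Y1" "x \<notin> Y2" by blast
    then obtain \<Omega> where "qc_open X \<Omega>" "Y2 \<in> Uprime X \<Omega>" "Y1 \<notin> Uprime X \<Omega>"
      using separate[OF assms Y(1,2)] by blast
    then show ?thesis using open_Z_Uprime by blast
  next
    case True
    then obtain x where "x \<in> Y2" "x \<notin> Y1" using Y by blast
    then obtain \<Omega> where "qc_open X \<Omega>" "Y1 \<in> Uprime X \<Omega>" "Y2 \<notin> Uprime X \<Omega>"
      using separate[OF assms Y(2,1)] by blast
    then show ?thesis using open_Z_Uprime by blast
  qed
qed

lemma basis_Z:
  "openin (zariski_Xprime X) = arbitrary union_of (qc_open (zariski_Xprime X))"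
proof (rule ext, rule iffI)
  fix V assume V: "openin (zariski_Xprime X) V"
  define S where "S = Uprime X ` {\<Omega>. qc_open X \<Omega> \<and> Uprime X \<Omega> \<subseteq> V}"
  have "\<Union>S = V" using open_Z_char[OF V] by (auto simp: S_def)
  moreover have "S \<subseteq> Collect (qc_open (zariski_Xprime X))"
    by (auto simp: S_def qc_Z_Uprime)
  ultimately show "(arbitrary union_of qc_open (zariski_Xprime X)) V"
    unfolding union_of_def arbitrary_def by blast
next
  fix V assume "(arbitrary union_of qc_open (zariski_Xprime X)) V"
  then obtain \<U> where U: "\<U> \<subseteq> Collect (qc_open (zariski_Xprime X))" "\<Union>\<U> = V"
    unfolding union_of_def by (elim exE conjE)
  have "\<And>W. W \<in> \<U> \<Longrightarrow> openin (zariski_Xprime X) W" using U(1) by (auto simp: qc_open_def)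
  then have "openin (zariski_Xprime X) (\<Union>\<U>)" by (rule openin_Union)
  then show "openin (zariski_Xprime X) V" using U(2) by simp
qed


lemma irr_fin:
  assumes irr: "irreducible_in (zariski_Xprime X) \<C>"
    and "finite G" "\<forall>g\<in>G. qc_open X g \<and> (\<exists>W\<in>\<C>. W \<inter> g = {})"
  shows "\<exists>W\<in>\<C>. W \<inter> \<Union>G = {}"
  using assms(2,3)
proof (induction G rule: finite_induct)
  case empty
  then show ?case using irr by (auto simp: irreducible_in_def)
next
  case (insert g G)
  then obtain W where W: "W \<in> \<C>" "W \<inter> \<Union>G = {}" by auto
  obtain Z' where Z': "Z' \<in> \<C>" "Z' \<inter> g = {}" using insert by auto
  have qg: "qc_open X g" using insert by auto
  have qG: "qc_open X (\<Union>G)" using insert by (intro qc_open_Union) auto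
  have sub: "\<C> \<subseteq> Xprime X" using irr by (auto simp: irreducible_in_def topspace_Z)
  define A where "A = Xprime X - Uprime X (\<Union>G)"
  define B where "B = Xprime X - Uprime X g"
  have cA: "closedin (zariski_Xprime X) A"
    unfolding A_def using open_Z_Uprime[OF qG] topspace_Z[of X]
    by (metis closedin_diff closedin_topspace)
  have cB: "closedin (zariski_Xprime X) B"
    unfolding B_def using open_Z_Uprime[OF qg] topspace_Z[of X]
    by (metis closedin_diff closedin_topspace)
  have nA: "\<not> \<C> \<subseteq> A" using W sub by (auto simp: A_def Uprime_def)
  have nB: "\<not> \<C> \<subseteq> B" using Z' sub by (auto simp: B_def Uprime_def)
  have "\<not> \<C> \<subseteq> A \<union> B"
    using irr cA cB nA nB unfolding irreducible_in_def by blast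
  then obtain W' where "W' \<in> \<C>" "W' \<notin> A" "W' \<notin> B" by blast
  then have "W' \<in> Uprime X (\<Union>G)" "W' \<in> Uprime X g" using sub by (auto simp: A_def B_def)
  then show ?case using \<open>W' \<in> \<C>\<close> by (auto simp: Uprime_def)
qed

lemma key_claim:
  assumes sp: "spectral_space X" and irr: "irreducible_in (zariski_Xprime X) \<C>"
    and q: "qc_open X \<Omega>" and d: "\<Omega> \<inter> \<Inter>\<C> = {}"
  shows "\<exists>W\<in>\<C>. W \<inter> \<Omega> = {}"
proof -
  have sub: "\<C> \<subseteq> Xprime X" using irr by (auto simp: irreducible_in_def topspace_Z)
  define S where "S = {\<Omega>'. qc_open X \<Omega>' \<and> (\<exists>W\<in>\<C>. W \<inter> \<Omega>' = {})}"
  have cov: "\<Omega> \<subseteq> \<Union>S"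
  proof
    fix x assume x: "x \<in> \<Omega>"
    have oO: "openin X \<Omega>" using q by (simp add: qc_open_def)
    have xt: "x \<in> topspace X" using openin_subset[OF oO] x by (rule subsetD)
    have "x \<notin> \<Inter>\<C>"
    proof
      assume "x \<in> \<Inter>\<C>"
      then have "x \<in> \<Omega> \<inter> \<Inter>\<C>" using x by (rule IntI[rotated])
      then show False using d by simp
    qed
    then have "\<exists>W\<in>\<C>. x \<notin> W" by auto
    then obtain W where W: "W \<in> \<C>" "x \<notin> W" by (elim bexE)
    have "closedin X W" using W(1) sub by (auto simp: Xprime_def)
    then have oW: "openin X (topspace X - W)" by (rule openin_diff[OF openin_topspace, rotated])
    have xW: "x \<in> topspace X - W" using xt W(2) by simp
    obtain \<Omega>' where \<Omega>': "qc_open X \<Omega>'" "x \<in> \<Omega>'" "\<Omega>' \<subseteq> topspace X - W"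
      using spectral_basis[OF sp oW xW] by (elim exE conjE)
    have "W \<inter> \<Omega>' = {}" using \<Omega>'(3) by auto
    then have "\<Omega>' \<in> S" using \<Omega>'(1) W(1) unfolding S_def by auto
    then show "x \<in> \<Union>S" using \<Omega>'(2) by (rule UnionI)
  qed
  have openS: "\<forall>U\<in>S. openin X U" unfolding S_def qc_open_def by blast
  have "compactin X \<Omega>" using q by (simp add: qc_open_def)
  then have H: "\<forall>\<U>. (\<forall>U \<in> \<U>. openin X U) \<and> \<Omega> \<subseteq> \<Union>\<U>
          \<longrightarrow> (\<exists>\<F>. finite \<F> \<and> \<F> \<subseteq> \<U> \<and> \<Omega> \<subseteq> \<Union>\<F>)" unfolding compactin_def by (rule conjunct2)
  have "\<exists>\<F>. finite \<F> \<and> \<F> \<subseteq> S \<and> \<Omega> \<subseteq> \<Union>\<F>"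
    using mp[OF spec[OF H, of S] conjI[OF openS cov]] .
  then obtain F where F: "finite F" "F \<subseteq> S" "\<Omega> \<subseteq> \<Union>F" by (elim exE conjE)
  have "\<forall>g\<in>F. qc_open X g \<and> (\<exists>W\<in>\<C>. W \<inter> g = {})" using F(2) unfolding S_def by auto
  then have "\<exists>W\<in>\<C>. W \<inter> \<Union>F = {}" by (rule irr_fin[OF irr F(1)])
  then obtain W where W: "W \<in> \<C>" "W \<inter> \<Union>F = {}" by (elim bexE)
  have WO: "W \<inter> \<Omega> = {}" using F(3) W(2) by blast
  show ?thesis by (rule bexI[where P="\<lambda>W. W \<inter> \<Omega> = {}", OF WO W(1)])
qed

lemma generic_Z:
  assumes sp: "spectral_space X" and cl: "closedin (zariski_Xprime X) \<C>"
    and irr: "irreducible_in (zariski_Xprime X) \<C>"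
  shows "\<exists>Y\<in>topspace (zariski_Xprime X). zariski_Xprime X closure_of {Y} = \<C>"
proof -
  have sub: "\<C> \<subseteq> Xprime X" and ne: "\<C> \<noteq> {}"
    using irr by (auto simp: irreducible_in_def topspace_Z)
  define Y where "Y = \<Inter>\<C>"
  have cY: "closedin X Y" unfolding Y_def
    using ne sub by (intro closedin_Inter) (auto simp: Xprime_def)
  have ctop: "compact_space X" using sp by (simp add: spectral_space_def)
  have qT: "qc_open X (topspace X)"
    using ctop by (simp add: qc_open_def compact_space_def)
  have YT: "Y \<subseteq> topspace X" using cY closedin_subset by auto
  have Yne: "Y \<noteq> {}"
  proof
    assume "Y = {}"
    then have "topspace X \<inter> \<Inter>\<C> = {}" by (simp add: Y_def)
    then obtain W where "W \<in> \<C>" "W \<inter> topspace X = {}"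
      using key_claim[OF sp irr qT] by blast
    moreover then have "closedin X W" "W \<noteq> {}" using sub by (auto simp: Xprime_def)
    ultimately show False using closedin_subset by blast
  qed
  have YX: "Y \<in> Xprime X" using cY Yne by (simp add: Xprime_def)
  have YC: "Y \<in> \<C>"
  proof (rule ccontr)
    assume "Y \<notin> \<C>"
    have "openin (zariski_Xprime X) (Xprime X - \<C>)"
      using cl topspace_Z[of X] by (metis closedin_def)
    then obtain \<Omega> where \<Omega>: "qc_open X \<Omega>" "Y \<in> Uprime X \<Omega>" "Uprime X \<Omega> \<subseteq> Xprime X - \<C>"
      using open_Z_char YX \<open>Y \<notin> \<C>\<close> by blast
    then have "\<Omega> \<inter> \<Inter>\<C> = {}" by (auto simp: Uprime_def Y_def)
    then obtain W where "W \<in> \<C>" "W \<inter> \<Omega> = {}"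
      using key_claim[OF sp irr \<Omega>(1)] by blast
    then have "W \<in> Uprime X \<Omega>" using sub by (auto simp: Uprime_def)
    then show False using \<Omega>(3) \<open>W \<in> \<C>\<close> by blast
  qed
  have "zariski_Xprime X closure_of {Y} = \<C>"
  proof
    show "zariski_Xprime X closure_of {Y} \<subseteq> \<C>"
      using YC cl by (intro closure_of_minimal) auto
    show "\<C> \<subseteq> zariski_Xprime X closure_of {Y}"
    proof
      fix W assume W: "W \<in> \<C>"
      have "Y \<subseteq> W" using W by (auto simp: Y_def)
      then show "W \<in> zariski_Xprime X closure_of {Y}"
        unfolding in_closure_of using W sub YX open_Z_down[of X _ W Y]
        by (auto simp: topspace_Z)
    qed
  qed
  then show ?thesis using YX by (auto simp: topspace_Z)
qed

lemma spectral_Z: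
  assumes sp: "spectral_space X"
  shows "spectral_space (zariski_Xprime X)"
  unfolding spectral_space_def
proof (intro conjI allI impI)
  show "compact_space (zariski_Xprime X)"
    unfolding compact_space_def topspace_Z
    using compact_Z_Uprime[OF qc_open_empty, of X] by (simp add: Uprime_empty)
  show "t0_space (zariski_Xprime X)" using t0_Z[OF sp] .
  show "openin (zariski_Xprime X) = arbitrary union_of qc_open (zariski_Xprime X)"
    by (rule basis_Z)
next
  fix U V assume "qc_open (zariski_Xprime X) U \<and> qc_open (zariski_Xprime X) V"
  then show "qc_open (zariski_Xprime X) (U \<inter> V)" using qc_Z_Int by blast
next
  fix C assume "closedin (zariski_Xprime X) C \<and> irreducible_in (zariski_Xprime X) C"
  then show "\<exists>x\<in>topspace (zariski_Xprime X). zariski_Xprime X closure_of {x} = C"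
    using generic_Z[OF sp] by blast
qed


lemma gen_sub:
  assumes "\<And>s. s \<in> S \<Longrightarrow> openin T s" "openin (topology_generated_by S) u"
  shows "openin T u"
proof -
  have "generate_topology_on S u" using assms(2) by (rule openin_topology_generated_by)
  then show ?thesis
    by (induction rule: generate_topology_on.induct) (auto intro: assms(1))
qed

definition Cm :: "'a topology \<Rightarrow> 'a set \<Rightarrow> 'a set set" where
  "Cm X U = {C \<in> Xprime X. C \<inter> U \<noteq> {}}"

lemma open_LV: "openin X U \<Longrightarrow> openin (lower_vietoris X) (Cm X U)"
  unfolding lower_vietoris_def Cm_def by (rule topology_generated_by_Basis) blast

lemma inv_sub_LV:
  assumes "qc_open (zariski_Xprime X) V"
  shows "openin (lower_vietoris X) (topspace (zariski_Xprime X) - V)"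
proof -
  obtain F where F: "finite F" "\<forall>\<Omega>\<in>F. qc_open X \<Omega>" "V = \<Union>(Uprime X ` F)"
    using qc_Z_char[OF assms] by blast
  have eq: "topspace (zariski_Xprime X) - V = \<Inter>(Cm X ` insert (topspace X) F)"
  proof
    show "topspace (zariski_Xprime X) - V \<subseteq> \<Inter>(Cm X ` insert (topspace X) F)"
    proof
      fix C assume C: "C \<in> topspace (zariski_Xprime X) - V"
      then have CX: "C \<in> Xprime X" by (simp add: topspace_Z)
      then have "C \<subseteq> topspace X" "C \<noteq> {}" using closedin_subset by (auto simp: Xprime_def)
      then have "C \<in> Cm X (topspace X)" using CX by (auto simp: Cm_def)
      moreover have "C \<in> Cm X \<Omega>" if "\<Omega> \<in> F" for \<Omega>
        using C CX F(3) that by (auto simp: Cm_def Uprime_def)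
      ultimately show "C \<in> \<Inter>(Cm X ` insert (topspace X) F)" by blast
    qed
    show "\<Inter>(Cm X ` insert (topspace X) F) \<subseteq> topspace (zariski_Xprime X) - V"
      using F(3) by (auto simp: Cm_def Uprime_def topspace_Z)
  qed
  have "openin (lower_vietoris X) (\<Inter>(Cm X ` insert (topspace X) F))"
    using F(1,2) by (intro openin_Inter) (auto intro!: open_LV simp: qc_open_def)
  then show ?thesis using eq by simp
qed

lemma LV_sub_inv:
  assumes sp: "spectral_space X" and U: "openin X U"
  shows "openin (inverse_topology (zariski_Xprime X)) (Cm X U)"
proof -
  have eq: "Cm X U = \<Union>(Cm X ` {\<Omega>. qc_open X \<Omega> \<and> \<Omega> \<subseteq> U})"
  proof
    show "Cm X U \<subseteq> \<Union>(Cm X ` {\<Omega>. qc_open X \<Omega> \<and> \<Omega> \<subseteq> U})"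
    proof
      fix C assume "C \<in> Cm X U"
      then obtain x where x: "x \<in> C" "x \<in> U" "C \<in> Xprime X" by (auto simp: Cm_def)
      then obtain \<Omega> where "qc_open X \<Omega>" "x \<in> \<Omega>" "\<Omega> \<subseteq> U"
        using spectral_basis[OF sp U] by blast
      then show "C \<in> \<Union>(Cm X ` {\<Omega>. qc_open X \<Omega> \<and> \<Omega> \<subseteq> U})"
        using x by (auto simp: Cm_def)
    qed
    show "\<Union>(Cm X ` {\<Omega>. qc_open X \<Omega> \<and> \<Omega> \<subseteq> U}) \<subseteq> Cm X U"
      by (auto simp: Cm_def)
  qed
  have "openin (inverse_topology (zariski_Xprime X)) (Cm X \<Omega>)" if "qc_open X \<Omega>" for \<Omega>
  proof -
    have "Cm X \<Omega> = topspace (zariski_Xprime X) - Uprime X \<Omega>"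
      by (auto simp: Cm_def Uprime_def topspace_Z)
    then show ?thesis unfolding inverse_topology_def
      using qc_Z_Uprime[OF that] by (metis (mono_tags, lifting) mem_Collect_eq topology_generated_by_Basis)
  qed
  then show ?thesis using eq by (metis (no_types, lifting) imageE mem_Collect_eq openin_Union)
qed

theorem proposition4p3:
  fixes X :: "'a topology"
  assumes "spectral_space X"
  shows "spectral_space (zariski_Xprime X) \<and>
         inverse_topology (zariski_Xprime X) = lower_vietoris X"
proof
  show "spectral_space (zariski_Xprime X)" using spectral_Z[OF assms] .
  show "inverse_topology (zariski_Xprime X) = lower_vietoris X"
    unfolding topology_eq
  proof (intro allI iffI)
    fix u assume "openin (inverse_topology (zariski_Xprime X)) u"
    then show "openin (lower_vietoris X) u"
      unfolding inverse_topology_def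
      by (rule gen_sub[rotated]) (auto intro: inv_sub_LV)
  next
    fix u assume "openin (lower_vietoris X) u"
    then show "openin (inverse_topology (zariski_Xprime X)) u"
      unfolding lower_vietoris_def
      by (rule gen_sub[rotated]) (auto intro: LV_sub_inv[OF assms] simp: Cm_def[symmetric])
  qed
qed

end
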